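(* Let $k\ge 1$, let $(\Lambda,d)$ be a $k$-graph, and let $p\in\mathbb{N}^k$. Then the dual $(p\Lambda,d_p)$ (defined in the context) is a $k$-graph.
   Context: A $k$-graph is a pair $(\Lambda,d)$ where $\Lambda$ is a countable category and $d:\Lambda\to\mathbb{N}^k$ is a functor satisfying the factorisation property: if $\lambda$ is a morphism with $d(\lambda)=m+n$, then there are unique morphisms $\mu\in d^{-1}(m)$, $\nu\in d^{-1}(n)$ with $\lambda=\mu\nu$. Morphisms are called paths; objects (vertices) are identified with the paths of degree $0$; $r$ and $s$ denote codomain and domain; $\Lambda^n:=d^{-1}(n)$. For $\lambda$ with $d(\lambda)=n$ and $l\le m\le n$ in $\mathbb{N}^k$, $\lambda(l,m)$ denotes the unique path with $d(\lambda(l,m))=m-l$ such that $\lambda=\lambda(0,l)\lambda(l,m)\lambda(m,n)$. For $p\in\mathbb{N}^k$, the dual $p\Lambda$ is defined as follows: its set of paths is $\{\lambda\in\Lambda: d(\lambda)\ge p\}$, its vertices are the elements of $\Lambda^p$, with range $r_p(\lambda):=\lambda(0,p)$, source $s_p(\lambda):=\lambda(d(\lambda)-p,d(\lambda))$, composition $\lambda\circ_p\mu:=\lambda\,\mu(p,d(\mu))$ $(=\lambda(0,d(\lambda)-p)\mu)$ whenever $s_p(\lambda)=r_p(\mu)$, and degree $d_p(\lambda):=d(\lambda)-p$. *)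

theory Defs
  imports Main "HOL-Library.Countable_Set" "HOL-Library.Function_Algebras"
begin

text \<open>Small categories in the arrows-only presentation: a set of morphisms M,
range (codomain) r, source (domain) s, and a composition c (only meaningful on
composable pairs).  Objects are the identity morphisms, i.e. the x with r x = x.
Degrees live in N^k, represented as functions 'k \<Rightarrow> nat for a finite type 'k
with CARD('k) = k; the order and the operations +, -, 0 are pointwise.\<close>

definition category :: "'a set \<Rightarrow> ('a \<Rightarrow> 'a) \<Rightarrow> ('a \<Rightarrow> 'a) \<Rightarrow> ('a \<Rightarrow> 'a \<Rightarrow> 'a) \<Rightarrow> bool" where
  "category M r s c \<longleftrightarrow>
     (\<forall>x\<in>M. r x \<in> M \<and> s x \<in> M) \<and>
     (\<forall>x\<in>M. r (r x) = r x \<and> s (r x) = r x \<and> r (s x) = s x \<and> s (s x) = s x) \<and>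
     (\<forall>x\<in>M. \<forall>y\<in>M. s x = r y \<longrightarrow> c x y \<in> M \<and> r (c x y) = r x \<and> s (c x y) = s y) \<and>
     (\<forall>x\<in>M. c (r x) x = x \<and> c x (s x) = x) \<and>
     (\<forall>x\<in>M. \<forall>y\<in>M. \<forall>z\<in>M. s x = r y \<and> s y = r z \<longrightarrow> c (c x y) z = c x (c y z))"

definition kgraph :: "'a set \<Rightarrow> ('a \<Rightarrow> 'a) \<Rightarrow> ('a \<Rightarrow> 'a) \<Rightarrow> ('a \<Rightarrow> 'a \<Rightarrow> 'a)
                      \<Rightarrow> ('a \<Rightarrow> ('k::finite \<Rightarrow> nat)) \<Rightarrow> bool" where
  "kgraph M r s c d \<longleftrightarrow>
     countable M \<and> category M r s c \<and>
     (\<forall>x\<in>M. d (r x) = 0) \<and>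
     (\<forall>x\<in>M. \<forall>y\<in>M. s x = r y \<longrightarrow> d (c x y) = d x + d y) \<and>
     (\<forall>la\<in>M. \<forall>m n. d la = m + n \<longrightarrow>
        (\<exists>!(mu, nu). mu \<in> M \<and> nu \<in> M \<and> d mu = m \<and> d nu = n \<and> s mu = r nu \<and> c mu nu = la))"

definition seg :: "'a set \<Rightarrow> ('a \<Rightarrow> 'a) \<Rightarrow> ('a \<Rightarrow> 'a) \<Rightarrow> ('a \<Rightarrow> 'a \<Rightarrow> 'a)
                   \<Rightarrow> ('a \<Rightarrow> ('k::finite \<Rightarrow> nat)) \<Rightarrow> 'a \<Rightarrow> ('k \<Rightarrow> nat) \<Rightarrow> ('k \<Rightarrow> nat) \<Rightarrow> 'a" where
  "seg M r s c d la l m = (THE nu. \<exists>al be. al \<in> M \<and> nu \<in> M \<and> be \<in> M \<and>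
        d al = l \<and> d nu = m - l \<and> d be = d la - m \<and>
        s al = r nu \<and> s nu = r be \<and> c (c al nu) be = la)"

definition dual_paths :: "'a set \<Rightarrow> ('a \<Rightarrow> ('k::finite \<Rightarrow> nat)) \<Rightarrow> ('k \<Rightarrow> nat) \<Rightarrow> 'a set" where
  "dual_paths M d p = {la \<in> M. p \<le> d la}"

definition dual_r :: "'a set \<Rightarrow> ('a \<Rightarrow> 'a) \<Rightarrow> ('a \<Rightarrow> 'a) \<Rightarrow> ('a \<Rightarrow> 'a \<Rightarrow> 'a)
                      \<Rightarrow> ('a \<Rightarrow> ('k::finite \<Rightarrow> nat)) \<Rightarrow> ('k \<Rightarrow> nat) \<Rightarrow> 'a \<Rightarrow> 'a" where
  "dual_r M r s c d p la = seg M r s c d la 0 p"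

definition dual_s :: "'a set \<Rightarrow> ('a \<Rightarrow> 'a) \<Rightarrow> ('a \<Rightarrow> 'a) \<Rightarrow> ('a \<Rightarrow> 'a \<Rightarrow> 'a)
                      \<Rightarrow> ('a \<Rightarrow> ('k::finite \<Rightarrow> nat)) \<Rightarrow> ('k \<Rightarrow> nat) \<Rightarrow> 'a \<Rightarrow> 'a" where
  "dual_s M r s c d p la = seg M r s c d la (d la - p) (d la)"

definition dual_comp :: "'a set \<Rightarrow> ('a \<Rightarrow> 'a) \<Rightarrow> ('a \<Rightarrow> 'a) \<Rightarrow> ('a \<Rightarrow> 'a \<Rightarrow> 'a)
                      \<Rightarrow> ('a \<Rightarrow> ('k::finite \<Rightarrow> nat)) \<Rightarrow> ('k \<Rightarrow> nat) \<Rightarrow> 'a \<Rightarrow> 'a \<Rightarrow> 'a" where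
  "dual_comp M r s c d p la mu = c la (seg M r s c d mu p (d mu))"

definition dual_d :: "('a \<Rightarrow> ('k::finite \<Rightarrow> nat)) \<Rightarrow> ('k \<Rightarrow> nat) \<Rightarrow> 'a \<Rightarrow> ('k \<Rightarrow> nat)" where
  "dual_d d p la = d la - p"

end

theory Submission
  imports Defs
begin

section \<open>Pointwise arithmetic on degrees\<close>

lemma fa_add_diff1 [simp]: "(a::'k \<Rightarrow> nat) + b - a = b"
  by (simp add: fun_eq_iff)
lemma fa_add_diff2 [simp]: "(a::'k \<Rightarrow> nat) + b - b = a"
  by (simp add: fun_eq_iff)
lemma fa_diff_add: "(p::'k \<Rightarrow> nat) \<le> a \<Longrightarrow> p + (a - p) = a"
  by (simp add: fun_eq_iff le_fun_def)
lemma fa_diff_add2: "(p::'k \<Rightarrow> nat) \<le> a \<Longrightarrow> (a - p) + p = a"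
  by (simp add: fun_eq_iff le_fun_def)
lemma fa_le_add1 [simp]: "(a::'k \<Rightarrow> nat) \<le> a + b"
  by (simp add: le_fun_def)
lemma fa_le_add2 [simp]: "(b::'k \<Rightarrow> nat) \<le> a + b"
  by (simp add: le_fun_def)
lemma fa_diff0 [simp]: "(a::'k \<Rightarrow> nat) - 0 = a"
  by (simp add: fun_eq_iff)
lemma fa_diff_self [simp]: "(a::'k \<Rightarrow> nat) - a = 0"
  by (simp add: fun_eq_iff)
lemma fa_diff_diff: "(p::'k \<Rightarrow> nat) \<le> a \<Longrightarrow> a - (a - p) = p"
  by (simp add: fun_eq_iff le_fun_def)
lemma fa_dc: "(p::'k \<Rightarrow> nat) \<le> x \<Longrightarrow> p \<le> y \<Longrightarrow> x + (y - p) - p = (x - p) + (y - p)"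
  by (simp add: fun_eq_iff le_fun_def)
lemma fa_split:
  assumes "(p::'k \<Rightarrow> nat) \<le> a" "a - p = m + n"
  shows "a = (m + p) + n"
proof (rule ext)
  fix x
  have 1: "p x \<le> a x" using assms(1) by (simp add: le_fun_def)
  have "(a - p) x = (m + n) x" using assms(2) by simp
  hence 2: "a x - p x = m x + n x" by simp
  show "a x = (m + p + n) x" using 1 2 by simp
qed
lemma fa_le_trans: "(p::'k \<Rightarrow> nat) \<le> a \<Longrightarrow> p \<le> a + b"
  by (simp add: le_fun_def add_increasing2)
lemma fa_le_trans2: "(p::'k \<Rightarrow> nat) \<le> b \<Longrightarrow> p \<le> a + b"
  by (simp add: le_fun_def trans_le_add2)


lemma my_ex1_unique: "Ex1 Q \<Longrightarrow> Q a \<Longrightarrow> Q b \<Longrightarrow> a = b" by blast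

locale kg =
  fixes M :: "'a set" and r s :: "'a \<Rightarrow> 'a" and c :: "'a \<Rightarrow> 'a \<Rightarrow> 'a"
    and d :: "'a \<Rightarrow> ('k::finite \<Rightarrow> nat)"
  assumes kg: "kgraph M r s c d"
begin

lemma cat: "category M r s c" using kg by (simp add: kgraph_def)

lemma r_in: "x \<in> M \<Longrightarrow> r x \<in> M" using cat by (simp add: category_def)
lemma s_in: "x \<in> M \<Longrightarrow> s x \<in> M" using cat by (simp add: category_def)
lemma r_r: "x \<in> M \<Longrightarrow> r (r x) = r x" using cat by (simp add: category_def)
lemma s_r: "x \<in> M \<Longrightarrow> s (r x) = r x" using cat by (simp add: category_def)
lemma r_s: "x \<in> M \<Longrightarrow> r (s x) = s x" using cat by (simp add: category_def)
lemma s_s: "x \<in> M \<Longrightarrow> s (s x) = s x" using cat by (simp add: category_def)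
lemma c_in: "x \<in> M \<Longrightarrow> y \<in> M \<Longrightarrow> s x = r y \<Longrightarrow> c x y \<in> M"
  using cat by (simp add: category_def)
lemma r_c: "x \<in> M \<Longrightarrow> y \<in> M \<Longrightarrow> s x = r y \<Longrightarrow> r (c x y) = r x"
  using cat by (simp add: category_def)
lemma s_c: "x \<in> M \<Longrightarrow> y \<in> M \<Longrightarrow> s x = r y \<Longrightarrow> s (c x y) = s y"
  using cat by (simp add: category_def)
lemma c_rl: "x \<in> M \<Longrightarrow> c (r x) x = x" using cat by (simp add: category_def)
lemma c_sr: "x \<in> M \<Longrightarrow> c x (s x) = x" using cat by (simp add: category_def)
lemma assoc: "x \<in> M \<Longrightarrow> y \<in> M \<Longrightarrow> z \<in> M \<Longrightarrow> s x = r y \<Longrightarrow> s y = r z \<Longrightarrow>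
   c (c x y) z = c x (c y z)"
  using cat unfolding category_def by blast
lemma d_r: "x \<in> M \<Longrightarrow> d (r x) = 0" using kg by (simp add: kgraph_def)
lemma d_s: "x \<in> M \<Longrightarrow> d (s x) = 0" using d_r[OF s_in, of x] r_s[of x] by simp
lemma d_c: "x \<in> M \<Longrightarrow> y \<in> M \<Longrightarrow> s x = r y \<Longrightarrow> d (c x y) = d x + d y"
  using kg by (simp add: kgraph_def)

lemma fac1: "x \<in> M \<Longrightarrow> d x = m + n \<Longrightarrow>
  (\<exists>!(mu, nu). mu \<in> M \<and> nu \<in> M \<and> d mu = m \<and> d nu = n \<and> s mu = r nu \<and> c mu nu = x)"
  using kg unfolding kgraph_def by blast

lemma fac_ex: "x \<in> M \<Longrightarrow> d x = m + n \<Longrightarrow>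
  \<exists>u v. u \<in> M \<and> v \<in> M \<and> d u = m \<and> d v = n \<and> s u = r v \<and> c u v = x"
  using fac1[of x m n] by blast

lemma uniq:
  assumes "u1 \<in> M" "v1 \<in> M" "u2 \<in> M" "v2 \<in> M" "s u1 = r v1" "s u2 = r v2"
    "c u1 v1 = c u2 v2" "d u1 = d u2"
  shows "u1 = u2 \<and> v1 = v2"
proof -
  let ?x = "c u1 v1"
  have x: "?x \<in> M" using assms c_in by blast
  have dx: "d ?x = d u1 + d v1" using assms d_c by blast
  have "d ?x = d u2 + d v2" using assms d_c by metis
  hence "d v2 = d v1" using dx assms(8) by simp
  define Q where "Q = (\<lambda>(mu, nu). mu \<in> M \<and> nu \<in> M \<and> d mu = d u1 \<and> d nu = d v1 \<and> s mu = r nu \<and> c mu nu = ?x)"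
  have e: "Ex1 Q" using fac1[OF x dx] unfolding Q_def .
  have q1: "Q (u1, v1)" using assms unfolding Q_def by simp
  have q2: "Q (u2, v2)" using assms \<open>d v2 = d v1\<close> unfolding Q_def by simp
  have "(u1, v1) = (u2, v2)" using my_ex1_unique[OF e q1 q2] .
  then show ?thesis by simp
qed

abbreviation "sg \<equiv> seg M r s c d"

lemma seg_unique:
  assumes "al \<in> M" "nu \<in> M" "be \<in> M" "s al = r nu" "s nu = r be"
  shows "sg (c (c al nu) be) (d al) (d al + d nu) = nu"
  unfolding seg_def
proof (rule the_equality)
  let ?la = "c (c al nu) be"
  have an: "c al nu \<in> M" using assms c_in by blast
  have san: "s (c al nu) = r be" using assms s_c by simp
  have dla: "d ?la = d al + d nu + d be" using assms an san d_c by simp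
  show "\<exists>ala bea. ala \<in> M \<and> nu \<in> M \<and> bea \<in> M \<and> d ala = d al \<and> d nu = d al + d nu - d al \<and>
     d bea = d ?la - (d al + d nu) \<and> s ala = r nu \<and> s nu = r bea \<and> c (c ala nu) bea = ?la"
    using assms dla by (intro exI[of _ al] exI[of _ be]) simp
  fix nu'
  assume "\<exists>al' be'. al' \<in> M \<and> nu' \<in> M \<and> be' \<in> M \<and> d al' = d al \<and> d nu' = d al + d nu - d al \<and>
     d be' = d ?la - (d al + d nu) \<and> s al' = r nu' \<and> s nu' = r be' \<and> c (c al' nu') be' = ?la"
  then obtain al' be' where h: "al' \<in> M" "nu' \<in> M" "be' \<in> M" "d al' = d al" "d nu' = d nu"
     "s al' = r nu'" "s nu' = r be'" "c (c al' nu') be' = ?la" by auto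
  have an': "c al' nu' \<in> M" using h c_in by blast
  have san': "s (c al' nu') = r be'" using h s_c by simp
  have "d (c al' nu') = d (c al nu)" using h assms d_c by simp
  hence "c al' nu' = c al nu" using uniq[OF an' h(3) an assms(3) san' san] h(8) by simp
  thus "nu' = nu" using uniq[OF h(1) h(2) assms(1) assms(2) h(6) assms(4)] h(4) by simp
qed

lemma seg_left: "a \<in> M \<Longrightarrow> b \<in> M \<Longrightarrow> s a = r b \<Longrightarrow> sg (c a b) 0 (d a) = a"
proof -
  assume h: "a \<in> M" "b \<in> M" "s a = r b"
  have "sg (c (c (r a) a) b) (d (r a)) (d (r a) + d a) = a"
    using seg_unique[of "r a" a b] h r_in[OF h(1)] s_r[OF h(1)] by blast
  thus ?thesis using c_rl[OF h(1)] d_r[OF h(1)] by simp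
qed

lemma seg_right: "a \<in> M \<Longrightarrow> b \<in> M \<Longrightarrow> s a = r b \<Longrightarrow> sg (c a b) (d a) (d a + d b) = b"
proof -
  assume h: "a \<in> M" "b \<in> M" "s a = r b"
  have "c (c a b) (s b) = c a b" using c_sr[OF c_in[OF h]] s_c[OF h] by simp
  moreover have "sg (c (c a b) (s b)) (d a) (d a + d b) = b"
    using seg_unique[OF h(1) h(2) s_in[OF h(2)] h(3) r_s[OF h(2), symmetric]] .
  ultimately show ?thesis by simp
qed


section \<open>The dual\<close>

context
  fixes p :: "'k \<Rightarrow> nat"
begin

abbreviation "P \<equiv> dual_paths M d p"
abbreviation "R' \<equiv> dual_r M r s c d p"
abbreviation "S' \<equiv> dual_s M r s c d p"
abbreviation "C' \<equiv> dual_comp M r s c d p"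
abbreviation "D' \<equiv> dual_d d p"
abbreviation "tl' x \<equiv> sg x p (d x)"

lemma R_eq: "a \<in> M \<Longrightarrow> b \<in> M \<Longrightarrow> s a = r b \<Longrightarrow> d a = p \<Longrightarrow> R' (c a b) = a"
  unfolding dual_r_def using seg_left by blast

lemma tl_eq: "a \<in> M \<Longrightarrow> b \<in> M \<Longrightarrow> s a = r b \<Longrightarrow> d a = p \<Longrightarrow> tl' (c a b) = b"
  using seg_right d_c by force

lemma S_eq: "a \<in> M \<Longrightarrow> b \<in> M \<Longrightarrow> s a = r b \<Longrightarrow> d b = p \<Longrightarrow> S' (c a b) = b"
  unfolding dual_s_def using seg_right d_c by force

lemma decR: "x \<in> M \<Longrightarrow> p \<le> d x \<Longrightarrow>
   \<exists>a b. a \<in> M \<and> b \<in> M \<and> d a = p \<and> s a = r b \<and> c a b = x"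
proof -
  assume h: "x \<in> M" "p \<le> d x"
  have "d x = p + (d x - p)" using fa_diff_add[OF h(2)] by simp
  from fac_ex[OF h(1) this] show ?thesis by blast
qed

lemma decS: "x \<in> M \<Longrightarrow> p \<le> d x \<Longrightarrow>
   \<exists>a b. a \<in> M \<and> b \<in> M \<and> d b = p \<and> s a = r b \<and> c a b = x"
proof -
  assume h: "x \<in> M" "p \<le> d x"
  have "d x = (d x - p) + p" using fa_diff_add2[OF h(2)] by simp
  from fac_ex[OF h(1) this] show ?thesis by blast
qed

lemma Rprops:
  assumes "x \<in> M" "p \<le> d x"
  shows "R' x \<in> M" "d (R' x) = p" "tl' x \<in> M" "s (R' x) = r (tl' x)" "c (R' x) (tl' x) = x"
    "d (tl' x) = d x - p" "r (R' x) = r x"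
proof -
  obtain a b where h: "a \<in> M" "b \<in> M" "d a = p" "s a = r b" "c a b = x"
    using decR[OF assms] by blast
  have e1: "R' x = a" using R_eq h by blast
  have e2: "tl' x = b" using tl_eq h by blast
  have dx: "d x = p + d b" using d_c h by force
  show "R' x \<in> M" "d (R' x) = p" "tl' x \<in> M" "s (R' x) = r (tl' x)" "c (R' x) (tl' x) = x"
    "d (tl' x) = d x - p" "r (R' x) = r x"
  proof -
    have "r x = r a" using r_c[OF h(1) h(2) h(4)] h(5) by simp
    thus "r (R' x) = r x" using e1 by simp
    show "d (tl' x) = d x - p" using e2 dx by simp
    show "R' x \<in> M" using e1 h(1) by simp
    show "d (R' x) = p" using e1 h(3) by simp
    show "tl' x \<in> M" using e2 h(2) by simp
    show "s (R' x) = r (tl' x)" using e1 e2 h(4) by simp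
    show "c (R' x) (tl' x) = x" using e1 e2 h(5) by simp
  qed
qed

lemma Sprops:
  assumes "x \<in> M" "p \<le> d x"
  shows "S' x \<in> M" "d (S' x) = p" "s (S' x) = s x"
proof -
  obtain a b where h: "a \<in> M" "b \<in> M" "d b = p" "s a = r b" "c a b = x"
    using decS[OF assms] by blast
  have e1: "S' x = b" using S_eq h by blast
  show "S' x \<in> M" "d (S' x) = p" "s (S' x) = s x"
  proof -
    have "s x = s b" using s_c[OF h(1) h(2) h(4)] h(5) by simp
    thus "s (S' x) = s x" using e1 by simp
    show "S' x \<in> M" using e1 h(2) by simp
    show "d (S' x) = p" using e1 h(3) by simp
  qed
qed

lemma vert:
  assumes "y \<in> M" "d y = p"
  shows "R' y = y" "S' y = y" "tl' y = s y"
proof -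
  show "R' y = y" using R_eq[of y "s y"] assms s_in r_s c_sr by simp
  show "S' y = y" using S_eq[of "r y" y] assms r_in s_r c_rl by simp
  show "tl' y = s y" using tl_eq[of y "s y"] assms s_in r_s c_sr by simp
qed

lemma R_c: "u \<in> M \<Longrightarrow> v \<in> M \<Longrightarrow> s u = r v \<Longrightarrow> p \<le> d u \<Longrightarrow> R' (c u v) = R' u"
proof -
  assume h: "u \<in> M" "v \<in> M" "s u = r v" "p \<le> d u"
  obtain a b where ab: "a \<in> M" "b \<in> M" "d a = p" "s a = r b" "c a b = u"
    using decR[OF h(1) h(4)] by blast
  have sb: "s b = r v" using h(3) s_c[OF ab(1) ab(2) ab(4)] ab(5) by simp
  have bv: "c b v \<in> M" using c_in[OF ab(2) h(2) sb] .
  have e: "c u v = c a (c b v)" using assoc[OF ab(1) ab(2) h(2) ab(4) sb] ab(5) by simp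
  have sa: "s a = r (c b v)" using r_c[OF ab(2) h(2) sb] ab(4) by simp
  have "R' (c a (c b v)) = a" using R_eq[OF ab(1) bv sa ab(3)] .
  moreover have "R' u = a" using R_eq[OF ab(1) ab(2) ab(4) ab(3)] ab(5) by simp
  ultimately show ?thesis using e by simp
qed

lemma tl_c: "u \<in> M \<Longrightarrow> v \<in> M \<Longrightarrow> s u = r v \<Longrightarrow> p \<le> d u \<Longrightarrow> tl' (c u v) = c (tl' u) v"
proof -
  assume h: "u \<in> M" "v \<in> M" "s u = r v" "p \<le> d u"
  obtain a b where ab: "a \<in> M" "b \<in> M" "d a = p" "s a = r b" "c a b = u"
    using decR[OF h(1) h(4)] by blast
  have sb: "s b = r v" using h(3) s_c[OF ab(1) ab(2) ab(4)] ab(5) by simp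
  have bv: "c b v \<in> M" using c_in[OF ab(2) h(2) sb] .
  have e: "c u v = c a (c b v)" using assoc[OF ab(1) ab(2) h(2) ab(4) sb] ab(5) by simp
  have sa: "s a = r (c b v)" using r_c[OF ab(2) h(2) sb] ab(4) by simp
  have "tl' (c a (c b v)) = c b v" using tl_eq[OF ab(1) bv sa ab(3)] .
  moreover have "tl' u = b" using tl_eq[OF ab(1) ab(2) ab(4) ab(3)] ab(5) by simp
  ultimately show ?thesis using e by simp
qed

lemma S_c: "u \<in> M \<Longrightarrow> v \<in> M \<Longrightarrow> s u = r v \<Longrightarrow> p \<le> d v \<Longrightarrow> S' (c u v) = S' v"
proof -
  assume h: "u \<in> M" "v \<in> M" "s u = r v" "p \<le> d v"
  obtain a b where ab: "a \<in> M" "b \<in> M" "d b = p" "s a = r b" "c a b = v"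
    using decS[OF h(2) h(4)] by blast
  have ra: "s u = r a" using h(3) r_c[OF ab(1) ab(2) ab(4)] ab(5) by simp
  have ua: "c u a \<in> M" using c_in[OF h(1) ab(1) ra] .
  have e: "c u v = c (c u a) b" using assoc[OF h(1) ab(1) ab(2) ra ab(4)] ab(5) by simp
  have sb: "s (c u a) = r b" using s_c[OF h(1) ab(1) ra] ab(4) by simp
  have "S' (c (c u a) b) = b" using S_eq[OF ua ab(2) sb ab(3)] .
  moreover have "S' v = b" using S_eq[OF ab(1) ab(2) ab(4) ab(3)] ab(5) by simp
  ultimately show ?thesis using e by simp
qed

lemma inP: "x \<in> P \<longleftrightarrow> x \<in> M \<and> p \<le> d x" by (simp add: dual_paths_def)
lemma D_eq: "D' x = d x - p" by (simp add: dual_d_def)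
lemma C_eq: "C' x y = c x (tl' y)" by (simp add: dual_comp_def)

lemma s_tl: "y \<in> M \<Longrightarrow> p \<le> d y \<Longrightarrow> s (tl' y) = s y"
proof -
  assume h: "y \<in> M" "p \<le> d y"
  note R = Rprops[OF h]
  have "s (c (R' y) (tl' y)) = s (tl' y)" using s_c[OF R(1) R(3) R(4)] .
  thus ?thesis using R(5) by simp
qed

lemma comp:
  assumes x: "x \<in> P" and y: "y \<in> P" and e: "S' x = R' y"
  shows "s x = r (tl' y)" "C' x y \<in> P" "R' (C' x y) = R' x" "S' (C' x y) = S' y"
    "D' (C' x y) = D' x + D' y"
proof -
  have xm: "x \<in> M" "p \<le> d x" using x inP by auto
  have ym: "y \<in> M" "p \<le> d y" using y inP by auto
  note Ry = Rprops[OF ym]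
  note Sx = Sprops[OF xm]
  show sx: "s x = r (tl' y)" using Sx(3) e Ry(4) by simp
  have cxy: "C' x y = c x (tl' y)" by (rule C_eq)
  have inM: "c x (tl' y) \<in> M" using c_in[OF xm(1) Ry(3) sx] .
  have dd: "d (c x (tl' y)) = d x + (d y - p)" using d_c[OF xm(1) Ry(3) sx] Ry(6) by simp
  show "C' x y \<in> P" using cxy inM dd xm(2) fa_le_trans inP by simp
  show "R' (C' x y) = R' x" using cxy R_c[OF xm(1) Ry(3) sx xm(2)] by simp
  show "D' (C' x y) = D' x + D' y" using cxy dd fa_dc[OF xm(2) ym(2)] D_eq by simp
  obtain a b where ab: "a \<in> M" "b \<in> M" "d b = p" "s a = r b" "c a b = x"
    using decS[OF xm] by blast
  have Sb: "S' x = b" using S_eq[OF ab(1) ab(2) ab(4) ab(3)] ab(5) by simp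
  have bR: "b = R' y" using Sb e by simp
  have sb: "s b = r (tl' y)" using bR Ry(4) by simp
  have "c x (tl' y) = c a (c b (tl' y))" using assoc[OF ab(1) ab(2) Ry(3) ab(4) sb] ab(5) by simp
  also have "c b (tl' y) = y" using bR Ry(5) by simp
  finally have cc: "c x (tl' y) = c a y" .
  have ay: "s a = r y" using ab(4) bR Ry(7) by simp
  show "S' (C' x y) = S' y" using cxy cc S_c[OF ab(1) ym(1) ay ym(2)] by simp
qed

lemma dual_cat: "category P R' S' C'"
  unfolding category_def
proof (intro conjI ballI impI)
  fix x assume x: "x \<in> P"
  have xm: "x \<in> M" "p \<le> d x" using x inP by auto
  note R = Rprops[OF xm]
  note S = Sprops[OF xm]
  note VR = vert[OF R(1) R(2)]
  note VS = vert[OF S(1) S(2)]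
  show "R' x \<in> P" using R(1) R(2) inP by simp
  show "S' x \<in> P" using S(1) S(2) inP by simp
  show "R' (R' x) = R' x" using VR(1) .
  show "S' (R' x) = R' x" using VR(2) .
  show "R' (S' x) = S' x" using VS(1) .
  show "S' (S' x) = S' x" using VS(2) .
  show "C' (R' x) x = x" using C_eq R(5) by simp
  have "C' x (S' x) = c x (s (S' x))" using C_eq VS(3) by simp
  thus "C' x (S' x) = x" using S(3) c_sr[OF xm(1)] by simp
next
  fix x y assume x: "x \<in> P" and y: "y \<in> P" and e: "S' x = R' y"
  note cm = comp[OF x y e]
  show "C' x y \<in> P" using cm(2) .
  show "R' (C' x y) = R' x" using cm(3) .
  show "S' (C' x y) = S' y" using cm(4) .
next
  fix x y z assume x: "x \<in> P" and y: "y \<in> P" and z: "z \<in> P"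
    and e: "S' x = R' y \<and> S' y = R' z"
  have xm: "x \<in> M" "p \<le> d x" using x inP by auto
  have ym: "y \<in> M" "p \<le> d y" using y inP by auto
  have zm: "z \<in> M" "p \<le> d z" using z inP by auto
  have sx: "s x = r (tl' y)" using comp(1)[OF x y] e by simp
  have sy: "s y = r (tl' z)" using comp(1)[OF y z] e by simp
  have sty: "s (tl' y) = r (tl' z)" using s_tl[OF ym] sy by simp
  note Ry = Rprops[OF ym]
  note Rz = Rprops[OF zm]
  have "C' (C' x y) z = c (c x (tl' y)) (tl' z)" using C_eq by simp
  also have "\<dots> = c x (c (tl' y) (tl' z))" using assoc[OF xm(1) Ry(3) Rz(3) sx sty] .
  also have "c (tl' y) (tl' z) = tl' (c y (tl' z))" using tl_c[OF ym(1) Rz(3) sy ym(2)] by simp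
  also have "c x (tl' (c y (tl' z))) = C' x (C' y z)" using C_eq by simp
  finally show "C' (C' x y) z = C' x (C' y z)" .
qed

lemma dual_fac:
  assumes la: "la \<in> P" and dl: "D' la = m + n"
  shows "\<exists>!(mu, nu). mu \<in> P \<and> nu \<in> P \<and> D' mu = m \<and> D' nu = n \<and> S' mu = R' nu \<and> C' mu nu = la"
proof -
  have lm: "la \<in> M" "p \<le> d la" using la inP by auto
  have "d la = (m + p) + n" using fa_split[OF lm(2)] dl D_eq by simp
  then obtain A B where AB: "A \<in> M" "B \<in> M" "d A = m + p" "d B = n" "s A = r B" "c A B = la"
    using fac_ex[OF lm(1)] by blast
  obtain A1 A2 where A12: "A1 \<in> M" "A2 \<in> M" "d A1 = m" "d A2 = p" "s A1 = r A2" "c A1 A2 = A"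
    using fac_ex[OF AB(1) AB(3)] by blast
  have sA2: "s A2 = r B" using s_c[OF A12(1) A12(2) A12(5)] A12(6) AB(5) by simp
  let ?nu = "c A2 B"
  have nuM: "?nu \<in> M" using c_in[OF A12(2) AB(2) sA2] .
  have dnu: "d ?nu = p + n" using d_c[OF A12(2) AB(2) sA2] A12(4) AB(4) by simp
  let ?Q = "\<lambda>(mu, nu). mu \<in> P \<and> nu \<in> P \<and> D' mu = m \<and> D' nu = n \<and> S' mu = R' nu \<and> C' mu nu = la"
  have q: "?Q (A, ?nu)"
  proof -
    have "A \<in> P" using AB(1) AB(3) inP by simp
    moreover have "?nu \<in> P" using nuM dnu inP by simp
    moreover have "D' A = m" using AB(3) D_eq by simp
    moreover have "D' ?nu = n" using dnu D_eq by simp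
    moreover have "S' A = A2" using S_eq[OF A12(1) A12(2) A12(5) A12(4)] A12(6) by simp
    moreover have "R' ?nu = A2" using R_eq[OF A12(2) AB(2) sA2 A12(4)] .
    moreover have "C' A ?nu = la" using C_eq tl_eq[OF A12(2) AB(2) sA2 A12(4)] AB(6) by simp
    ultimately show ?thesis by simp
  qed
  have u: "z = (A, ?nu)" if qz: "?Q z" for z
  proof -
    obtain mu nu where z: "z = (mu, nu)" by (cases z)
    have h: "mu \<in> P" "nu \<in> P" "D' mu = m" "D' nu = n" "S' mu = R' nu" "C' mu nu = la"
      using qz z by auto
    have mm: "mu \<in> M" "p \<le> d mu" using h(1) inP by auto
    have nm: "nu \<in> M" "p \<le> d nu" using h(2) inP by auto
    note Rn = Rprops[OF nm]
    have smu: "s mu = r (tl' nu)" using comp(1)[OF h(1) h(2) h(5)] .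
    have dmu: "d mu = m + p" using fa_diff_add2[OF mm(2)] h(3) D_eq by simp
    have "c mu (tl' nu) = c A B" using h(6) AB(6) C_eq by simp
    hence eq: "mu = A \<and> tl' nu = B" using uniq[OF mm(1) Rn(3) AB(1) AB(2) smu AB(5)] dmu AB(3) by simp
    have "S' A = A2" using S_eq[OF A12(1) A12(2) A12(5) A12(4)] A12(6) by simp
    hence "R' nu = A2" using h(5) eq by simp
    hence "nu = ?nu" using Rn(5) eq by simp
    thus ?thesis using z eq by simp
  qed
  show ?thesis by (rule ex1I[where P = ?Q, OF q u])
qed

lemma dual_kgraph: "kgraph P R' S' C' D'"
  unfolding kgraph_def
proof (intro conjI ballI allI impI)
  have "countable M" using kg by (simp add: kgraph_def)
  moreover have "P \<subseteq> M" using inP by auto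
  ultimately show "countable P" using countable_subset by blast
  show "category P R' S' C'" by (rule dual_cat)
next
  fix x assume x: "x \<in> P"
  have xm: "x \<in> M" "p \<le> d x" using x inP by auto
  show "D' (R' x) = 0" using Rprops(2)[OF xm] D_eq by simp
next
  fix x y assume "x \<in> P" "y \<in> P" "S' x = R' y"
  thus "D' (C' x y) = D' x + D' y" by (rule comp(5))
next
  fix la m n assume "la \<in> P" "D' la = m + n"
  thus "\<exists>!(mu, nu). mu \<in> P \<and> nu \<in> P \<and> D' mu = m \<and> D' nu = n \<and> S' mu = R' nu \<and> C' mu nu = la"
    by (rule dual_fac)
qed

end
end


theorem proposition3p2:
  fixes M :: "'a set" and r s :: "'a \<Rightarrow> 'a" and c :: "'a \<Rightarrow> 'a \<Rightarrow> 'a"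
    and d :: "'a \<Rightarrow> ('k::finite \<Rightarrow> nat)" and p :: "'k \<Rightarrow> nat"
  assumes "kgraph M r s c d"
  shows "kgraph (dual_paths M d p) (dual_r M r s c d p) (dual_s M r s c d p)
                (dual_comp M r s c d p) (dual_d d p)"
proof -
  interpret kg M r s c d using assms by (unfold_locales)
  show ?thesis by (rule dual_kgraph)
qed

end
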